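(* Let $\mathcal{E}$ be an even Dirichlet form on $L^2(X,m)$ and let $\mathfrak{D}$ be its Dirichlet space. Assume that every $f\in\mathfrak{D}$ is quasi-continuous and let $p>2$. Then the following are equivalent: (i) for every $q\in[2,p)$ there exists $C>0$ such that $\|f\|_{L^q(X,m)}\le C\|f\|_{\mathfrak{D}}$ for every $f\in\mathfrak{D}$; (ii) for every $q\in[2,p)$ there exists $C>0$ such that $C\,\mathrm{Cap}(A)\ge m(A)^{1/q}$ for every measurable $A\subseteq X$.
   Context: Standing setting: $X$ is a Hausdorff topological space and $m$ is a Borel measure on $X$ with full support, i.e. no nonempty open subset of $X$ has $m$-measure zero. $L^2(X,m)$ is the real $L^2$ space. A Dirichlet form is a functional $\mathcal{E}:L^2(X,m)\to[0,\infty]$ that is convex, lower semicontinuous and densely defined (its effective domain $\mathrm{dom}(\mathcal{E})=\{u:\mathcal{E}(u)<\infty\}$ is dense in $L^2(X,m)$), and such that for all $u,v\in L^2(X,m)$ and $\alpha>0$: (1) $\mathcal{E}(u\wedge v)+\mathcal{E}(u\vee v)\le \mathcal{E}(u)+\mathcal{E}(v)$; (2) $\mathcal{E}\big(v+\tfrac12((u-v+\alpha)_+-(u-v-\alpha)_-)\big)+\mathcal{E}\big(u-\tfrac12((u-v+\alpha)_+-(u-v-\alpha)_-)\big)\le \mathcal{E}(u)+\mathcal{E}(v)$, where $(\cdot)_+$, $(\cdot)_-$ denote positive and negative parts. $\mathcal{E}$ is called even if $\mathcal{E}(0)=0$ and $\mathcal{E}(-u)=\mathcal{E}(u)$ for all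 $u$. Set $\mathcal{E}_1(u)=\|u\|_{L^2(X,m)}^2+\mathcal{E}(u)$. The Dirichlet space is $\mathfrak{D}=\{u\in L^2(X,m):\exists\lambda>0,\ \mathcal{E}_1(\lambda u)<\infty\}$ with the Minkowski norm $\|u\|_{\mathfrak{D}}=\inf\{\lambda>0:\mathcal{E}_1(u/\lambda)\le 1\}$. Capacity: for $A\subseteq X$ let $\mathcal{L}_A=\{u\in L^2(X,m): u\ge 1\ m\text{-a.e. on } U \text{ for some open } U\supseteq A\}$ and define the norm-capacity $\mathrm{Cap}(A)=\inf\{\|u\|_{\mathfrak{D}}: u\in\mathcal{L}_A\}$ (with $\|u\|_{\mathfrak{D}}=\infty$ for $u\notin\mathfrak{D}$, $\inf\emptyset=\infty$). A function $f:X\to\mathbb{R}$ is quasi-continuous if for every $\varepsilon>0$ there is an open set $O\subseteq X$ with $\mathrm{Cap}(O)\le\varepsilon$ such that $f|_{X\setminus O}$ is continuous. An element $f\in L^2(X,m)$ is called quasi-continuous if it has a quasi-continuous representative, and $f$ is then identified with that representative. *)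

theory Defs
  imports "HOL-Analysis.Analysis"
begin

text \<open>Elements of the real space L2(X,m) are represented by Borel measurable,
  square integrable functions; all notions below are invariant under a.e. equality.\<close>

definition L2 :: "'a measure \<Rightarrow> ('a \<Rightarrow> real) set" where
  "L2 M = {f. f \<in> borel_measurable M \<and> integrable M (\<lambda>x. (f x)\<^sup>2)}"

definition L2norm :: "'a measure \<Rightarrow> ('a \<Rightarrow> real) \<Rightarrow> real" where
  "L2norm M f = sqrt (integral\<^sup>L M (\<lambda>x. (f x)\<^sup>2))"

definition ennpow :: "ennreal \<Rightarrow> real \<Rightarrow> ennreal" where
  "ennpow x r = (if x = \<infinity> then \<infinity> else ennreal ((enn2real x) powr r))"

definition Lqnorm :: "'a measure \<Rightarrow> real \<Rightarrow> ('a \<Rightarrow> real) \<Rightarrow> ennreal" where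
  "Lqnorm M q f = ennpow (\<integral>\<^sup>+ x. ennreal (\<bar>f x\<bar> powr q) \<partial>M) (1 / q)"

definition pos_part :: "real \<Rightarrow> real" where "pos_part x = max x 0"
definition neg_part :: "real \<Rightarrow> real" where "neg_part x = max (- x) 0"

definition dirichlet_form :: "'a measure \<Rightarrow> (('a \<Rightarrow> real) \<Rightarrow> ennreal) \<Rightarrow> bool" where
  "dirichlet_form M E \<longleftrightarrow>
     \<comment> \<open>E is a functional on L2 (classes): invariant under a.e. equality\<close>
     (\<forall>u\<in>L2 M. \<forall>v\<in>L2 M. (AE x in M. u x = v x) \<longrightarrow> E u = E v) \<and>
     \<comment> \<open>convex\<close>
     (\<forall>u\<in>L2 M. \<forall>v\<in>L2 M. \<forall>t::real. 0 \<le> t \<and> t \<le> 1 \<longrightarrow>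
        E (\<lambda>x. t * u x + (1 - t) * v x) \<le> ennreal t * E u + ennreal (1 - t) * E v) \<and>
     \<comment> \<open>lower semicontinuous w.r.t. the L2 norm\<close>
     (\<forall>u\<in>L2 M. \<forall>w::nat \<Rightarrow> 'a \<Rightarrow> real. (\<forall>n. w n \<in> L2 M) \<and>
        ((\<lambda>n. L2norm M (\<lambda>x. w n x - u x)) \<longlonglongrightarrow> 0) \<longrightarrow> E u \<le> liminf (\<lambda>n. E (w n))) \<and>
     \<comment> \<open>densely defined\<close>
     (\<forall>u\<in>L2 M. \<forall>\<epsilon>>0. \<exists>v\<in>L2 M. E v < \<infinity> \<and> L2norm M (\<lambda>x. u x - v x) < \<epsilon>) \<and>
     \<comment> \<open>condition (1)\<close>
     (\<forall>u\<in>L2 M. \<forall>v\<in>L2 M. E (\<lambda>x. min (u x) (v x)) + E (\<lambda>x. max (u x) (v x)) \<le> E u + E v) \<and>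
     \<comment> \<open>condition (2)\<close>
     (\<forall>u\<in>L2 M. \<forall>v\<in>L2 M. \<forall>\<alpha>::real. \<alpha> > 0 \<longrightarrow>
        (let w = (\<lambda>x. (1/2) * (pos_part (u x - v x + \<alpha>) - neg_part (u x - v x - \<alpha>)))
         in E (\<lambda>x. v x + w x) + E (\<lambda>x. u x - w x) \<le> E u + E v))"

definition even_form :: "'a measure \<Rightarrow> (('a \<Rightarrow> real) \<Rightarrow> ennreal) \<Rightarrow> bool" where
  "even_form M E \<longleftrightarrow> E (\<lambda>x. 0) = 0 \<and> (\<forall>u\<in>L2 M. E (\<lambda>x. - u x) = E u)"

definition E1 :: "'a measure \<Rightarrow> (('a \<Rightarrow> real) \<Rightarrow> ennreal) \<Rightarrow> ('a \<Rightarrow> real) \<Rightarrow> ennreal" where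
  "E1 M E u = ennreal (integral\<^sup>L M (\<lambda>x. (u x)\<^sup>2)) + E u"

definition dirichlet_space :: "'a measure \<Rightarrow> (('a \<Rightarrow> real) \<Rightarrow> ennreal) \<Rightarrow> ('a \<Rightarrow> real) set" where
  "dirichlet_space M E = {u \<in> L2 M. \<exists>c::real>0. E1 M E (\<lambda>x. c * u x) < \<infinity>}"

definition Dnorm :: "'a measure \<Rightarrow> (('a \<Rightarrow> real) \<Rightarrow> ennreal) \<Rightarrow> ('a \<Rightarrow> real) \<Rightarrow> ennreal" where
  "Dnorm M E u = (if u \<in> dirichlet_space M E
     then (INF c\<in>{c::real. c > 0 \<and> E1 M E (\<lambda>x. u x / c) \<le> 1}. ennreal c) else \<infinity>)"

definition cap_test :: "'a::topological_space measure \<Rightarrow> 'a set \<Rightarrow> ('a \<Rightarrow> real) set" where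
  "cap_test M A = {u \<in> L2 M. \<exists>U. open U \<and> A \<subseteq> U \<and> (AE x in M. x \<in> U \<longrightarrow> u x \<ge> 1)}"

definition Cap :: "'a::topological_space measure \<Rightarrow> (('a \<Rightarrow> real) \<Rightarrow> ennreal) \<Rightarrow> 'a set \<Rightarrow> ennreal" where
  "Cap M E A = (INF u\<in>cap_test M A. Dnorm M E u)"

definition quasi_continuous :: "'a::topological_space measure \<Rightarrow> (('a \<Rightarrow> real) \<Rightarrow> ennreal) \<Rightarrow> ('a \<Rightarrow> real) \<Rightarrow> bool" where
  "quasi_continuous M E f \<longleftrightarrow>
     (\<forall>\<epsilon>::real>0. \<exists>V. open V \<and> Cap M E V \<le> ennreal \<epsilon> \<and> continuous_on (- V) f)"

definition qc_element :: "'a::topological_space measure \<Rightarrow> (('a \<Rightarrow> real) \<Rightarrow> ennreal) \<Rightarrow> ('a \<Rightarrow> real) \<Rightarrow> bool" where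
  "qc_element M E f \<longleftrightarrow> (\<exists>g. quasi_continuous M E g \<and> (AE x in M. f x = g x))"

end

theory Submission
  imports Defs
begin


lemma space_eq: "sets M = sets borel \<Longrightarrow> space M = UNIV"
  by (metis sets_eq_imp_space_eq space_borel)

lemma ennpow_mono: "x \<le> y \<Longrightarrow> r \<ge> 0 \<Longrightarrow> ennpow x r \<le> ennpow y r"
  unfolding ennpow_def
  apply (cases "y = \<infinity>")
   apply simp
  apply (cases "x = \<infinity>")
   apply (simp add: top_unique)
  by (auto intro!: ennreal_leI powr_mono2 enn2real_mono simp: top.not_eq_extremum)

lemma L2_add: "a \<in> L2 M \<Longrightarrow> b \<in> L2 M \<Longrightarrow> (\<lambda>x. a x + b x) \<in> L2 M"
proof -
  assume "a \<in> L2 M" "b \<in> L2 M"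
  then have a: "a \<in> borel_measurable M" "integrable M (\<lambda>x. (a x)\<^sup>2)"
    and b: "b \<in> borel_measurable M" "integrable M (\<lambda>x. (b x)\<^sup>2)" by (auto simp: L2_def)
  have int: "integrable M (\<lambda>x. 2 * (a x)\<^sup>2 + 2 * (b x)\<^sup>2)" using a b by simp
  have meas: "(\<lambda>x. (a x + b x)\<^sup>2) \<in> borel_measurable M" using a b by simp
  have "AE x in M. norm ((a x + b x)\<^sup>2) \<le> norm (2 * (a x)\<^sup>2 + 2 * (b x)\<^sup>2)"
  proof (rule AE_I2)
    fix x
    have "(a x + b x)\<^sup>2 \<le> 2 * (a x)\<^sup>2 + 2 * (b x)\<^sup>2"
      using sum_squares_ge_zero[of "a x - b x" 0] by (simp add: power2_eq_square algebra_simps)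
    then show "norm ((a x + b x)\<^sup>2) \<le> norm (2 * (a x)\<^sup>2 + 2 * (b x)\<^sup>2)" by simp
  qed
  from Bochner_Integration.integrable_bound[OF int meas this] a b show ?thesis by (simp add: L2_def)
qed

lemma L2_scale: "a \<in> L2 M \<Longrightarrow> (\<lambda>x. k * a x) \<in> L2 M"
  unfolding L2_def by (auto simp add: power_mult_distrib)

lemma L2_div: "a \<in> L2 M \<Longrightarrow> (\<lambda>x. a x / k) \<in> L2 M"
  using L2_scale[of a M "1/k"] by simp

lemma L2_abs: "a \<in> L2 M \<Longrightarrow> (\<lambda>x. \<bar>a x\<bar>) \<in> L2 M"
  unfolding L2_def by auto

lemma L2_neg: "a \<in> L2 M \<Longrightarrow> (\<lambda>x. - a x) \<in> L2 M"
  unfolding L2_def by auto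


lemma L2_int: "a \<in> L2 M \<Longrightarrow> integrable M (\<lambda>x. (a x)\<^sup>2)"
  unfolding L2_def by auto

lemma E1_conv:
  assumes dir: "dirichlet_form M E" and a: "a \<in> L2 M" and b: "b \<in> L2 M" and t: "0 \<le> t" "t \<le> 1"
  shows "E1 M E (\<lambda>x. t * a x + (1-t) * b x) \<le> ennreal t * E1 M E a + ennreal (1-t) * E1 M E b"
proof -
  have Econv: "E (\<lambda>x. t * a x + (1-t) * b x) \<le> ennreal t * E a + ennreal (1-t) * E b"
    using dir a b t unfolding dirichlet_form_def by blast
  have ia: "integrable M (\<lambda>x. (a x)\<^sup>2)" using a by (rule L2_int)
  have ib: "integrable M (\<lambda>x. (b x)\<^sup>2)" using b by (rule L2_int)
  have ic: "integrable M (\<lambda>x. (t * a x + (1-t) * b x)\<^sup>2)"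
    using L2_int[OF L2_add[OF L2_scale[OF a] L2_scale[OF b]]] by simp
  have pt: "(t * a x + (1-t) * b x)\<^sup>2 \<le> t * (a x)\<^sup>2 + (1-t) * (b x)\<^sup>2" for x
  proof -
    have "t * (a x)\<^sup>2 + (1-t) * (b x)\<^sup>2 - (t * a x + (1-t) * b x)\<^sup>2 = t * (1-t) * (a x - b x)\<^sup>2"
      by (simp add: power2_eq_square algebra_simps)
    moreover have "t * (1-t) * (a x - b x)\<^sup>2 \<ge> 0" using t by simp
    ultimately show ?thesis by linarith
  qed
  have "integral\<^sup>L M (\<lambda>x. (t * a x + (1-t) * b x)\<^sup>2) \<le> integral\<^sup>L M (\<lambda>x. t * (a x)\<^sup>2 + (1-t) * (b x)\<^sup>2)"
    by (rule integral_mono) (use ic ia ib pt in auto)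
  also have "\<dots> = t * integral\<^sup>L M (\<lambda>x. (a x)\<^sup>2) + (1-t) * integral\<^sup>L M (\<lambda>x. (b x)\<^sup>2)"
    using ia ib by simp
  finally have R: "integral\<^sup>L M (\<lambda>x. (t * a x + (1-t) * b x)\<^sup>2) \<le> t * integral\<^sup>L M (\<lambda>x. (a x)\<^sup>2) + (1-t) * integral\<^sup>L M (\<lambda>x. (b x)\<^sup>2)" .
  have A: "integral\<^sup>L M (\<lambda>x. (a x)\<^sup>2) \<ge> 0" "integral\<^sup>L M (\<lambda>x. (b x)\<^sup>2) \<ge> 0" by simp_all
  have "ennreal (t * integral\<^sup>L M (\<lambda>x. (a x)\<^sup>2) + (1-t) * integral\<^sup>L M (\<lambda>x. (b x)\<^sup>2))
     = ennreal t * ennreal (integral\<^sup>L M (\<lambda>x. (a x)\<^sup>2)) + ennreal (1-t) * ennreal (integral\<^sup>L M (\<lambda>x. (b x)\<^sup>2))"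
    using t A by (simp add: ennreal_mult)
  with R have I: "ennreal (integral\<^sup>L M (\<lambda>x. (t * a x + (1-t) * b x)\<^sup>2))
     \<le> ennreal t * ennreal (integral\<^sup>L M (\<lambda>x. (a x)\<^sup>2)) + ennreal (1-t) * ennreal (integral\<^sup>L M (\<lambda>x. (b x)\<^sup>2))"
    by (metis ennreal_leI)
  have "E1 M E (\<lambda>x. t * a x + (1-t) * b x) \<le>
     (ennreal t * ennreal (integral\<^sup>L M (\<lambda>x. (a x)\<^sup>2)) + ennreal (1-t) * ennreal (integral\<^sup>L M (\<lambda>x. (b x)\<^sup>2)))
     + (ennreal t * E a + ennreal (1-t) * E b)"
    unfolding E1_def using I Econv by (rule add_mono)
  also have "\<dots> = ennreal t * E1 M E a + ennreal (1-t) * E1 M E b"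
    unfolding E1_def by (simp add: distrib_left ac_simps)
  finally show ?thesis .
qed

lemma E1_tri:
  assumes dir: "dirichlet_form M E" and a: "a \<in> L2 M" and b: "b \<in> L2 M" and c: "c > 0" and r: "r > 0"
    and ea: "E1 M E (\<lambda>x. a x / c) \<le> 1" and eb: "E1 M E (\<lambda>x. b x / r) \<le> 1"
  shows "E1 M E (\<lambda>x. (a x + b x) / (c + r)) \<le> 1"
proof -
  define t where "t = c / (c + r)"
  have t: "0 \<le> t" "t \<le> 1" using c r by (auto simp: t_def)
  have eq: "(\<lambda>x. (a x + b x) / (c + r)) = (\<lambda>x. t * (a x / c) + (1 - t) * (b x / r))"
  proof
    fix x
    have cr: "c + r \<noteq> 0" using c r by simp
    have "t + r / (c + r) = 1" using cr by (simp add: t_def add_divide_distrib[symmetric])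
    then have "1 - t = r / (c + r)" by linarith
    moreover have "t * (a x / c) = a x / (c + r)" using c by (simp add: t_def)
    moreover have "r / (c + r) * (b x / r) = b x / (c + r)" using r by simp
    ultimately show "(a x + b x) / (c + r) = t * (a x / c) + (1 - t) * (b x / r)"
      by (simp add: add_divide_distrib)
  qed
  have "E1 M E (\<lambda>x. (a x + b x) / (c + r)) \<le> ennreal t * E1 M E (\<lambda>x. a x / c) + ennreal (1-t) * E1 M E (\<lambda>x. b x / r)"
    unfolding eq by (rule E1_conv[OF dir L2_div[OF a] L2_div[OF b] t])
  also have "\<dots> \<le> ennreal t * 1 + ennreal (1-t) * 1"
    by (intro add_mono mult_left_mono ea eb) auto
  also have "\<dots> = ennreal (t + (1 - t))" using ennreal_plus[of t "1 - t"] t by simp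
  also have "\<dots> = 1" by simp
  finally show ?thesis .
qed

lemma Dnorm_le:
  assumes a: "a \<in> L2 M" and c: "c > 0" and ea: "E1 M E (\<lambda>x. a x / c) \<le> 1"
  shows "a \<in> dirichlet_space M E" "Dnorm M E a \<le> ennreal c"
proof -
  have eq: "(\<lambda>x. (1/c) * a x) = (\<lambda>x. a x / c)" by auto
  have "(1::ennreal) < \<infinity>" by simp
  then have "E1 M E (\<lambda>x. (1/c) * a x) < \<infinity>" unfolding eq using ea by (rule le_less_trans[rotated])
  then show D: "a \<in> dirichlet_space M E" using a c unfolding dirichlet_space_def by (auto intro!: exI[of _ "1/c"])
  show "Dnorm M E a \<le> ennreal c" unfolding Dnorm_def using D c ea by (auto intro!: INF_lower2[of c])
qed

lemma Dnorm_lt: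
  assumes "Dnorm M E u < ennreal e"
  obtains r where "r > 0" "r < e" "E1 M E (\<lambda>x. u x / r) \<le> 1" "u \<in> dirichlet_space M E"
proof -
  have D: "u \<in> dirichlet_space M E" using assms by (auto simp: Dnorm_def split: if_splits)
  then obtain r where "r > 0" "E1 M E (\<lambda>x. u x / r) \<le> 1" "ennreal r < ennreal e"
    using assms unfolding Dnorm_def by (auto simp: INF_less_iff)
  then show ?thesis using that D by (auto simp: ennreal_less_iff)
qed

lemma E_abs:
  assumes dir: "dirichlet_form M E" and even: "even_form M E" and u: "u \<in> L2 M"
  shows "E (\<lambda>x. \<bar>u x\<bar>) \<le> E u"
proof -
  have c1: "\<forall>u\<in>L2 M. \<forall>v\<in>L2 M. E (\<lambda>x. min (u x) (v x)) + E (\<lambda>x. max (u x) (v x)) \<le> E u + E v"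
    using dir unfolding dirichlet_form_def by blast
  have "E (\<lambda>x. min (u x) (- u x)) + E (\<lambda>x. max (u x) (- u x)) \<le> E u + E (\<lambda>x. - u x)"
    using c1[rule_format, OF u L2_neg[OF u]] by simp
  moreover have "(\<lambda>x. min (u x) (- u x)) = (\<lambda>x. - \<bar>u x\<bar>)" by (auto simp: fun_eq_iff)
  moreover have "(\<lambda>x. max (u x) (- u x)) = (\<lambda>x. \<bar>u x\<bar>)" by (auto simp: fun_eq_iff)
  moreover have ev: "\<forall>u\<in>L2 M. E (\<lambda>x. - u x) = E u" using even unfolding even_form_def by blast
  moreover have "E (\<lambda>x. - \<bar>u x\<bar>) = E (\<lambda>x. \<bar>u x\<bar>)" using ev[rule_format, OF L2_abs[OF u]] by simp
  moreover have "E (\<lambda>x. - u x) = E u" using ev u by blast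
  ultimately have "2 * E (\<lambda>x. \<bar>u x\<bar>) \<le> 2 * E u" by (simp add: mult_2)
  then show ?thesis by (simp add: ennreal_mult_le_mult_iff)
qed

lemma E1_abs:
  assumes dir: "dirichlet_form M E" and even: "even_form M E" and u: "u \<in> L2 M" and c: "c > 0"
  shows "E1 M E (\<lambda>x. \<bar>u x\<bar> / c) \<le> E1 M E (\<lambda>x. u x / c)"
proof -
  have eq: "(\<lambda>x. \<bar>u x\<bar> / c) = (\<lambda>x. \<bar>u x / c\<bar>)" using c by auto
  have eq2: "(\<lambda>x. (\<bar>u x / c\<bar>)\<^sup>2) = (\<lambda>x. (u x / c)\<^sup>2)" by (simp only: power2_abs)
  have "E (\<lambda>x. \<bar>u x / c\<bar>) \<le> E (\<lambda>x. u x / c)" using E_abs[OF dir even L2_div[OF u, of c]] by simp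
  then show ?thesis unfolding E1_def eq eq2 by (rule add_left_mono)
qed


lemma le_mult_INF:
  fixes f :: "'b \<Rightarrow> ennreal"
  assumes C: "C > 0" and H: "\<And>c. c \<in> S \<Longrightarrow> x \<le> ennreal C * f c"
  shows "x \<le> ennreal C * (INF c\<in>S. f c)"
proof -
  have k: "ennreal C * ennreal (1/C) = 1" using C by (simp add: ennreal_mult[symmetric])
  have "x * ennreal (1/C) \<le> (INF c\<in>S. f c)"
  proof (rule INF_greatest)
    fix c assume "c \<in> S"
    then have "x * ennreal (1/C) \<le> ennreal C * f c * ennreal (1/C)" using H by (intro mult_right_mono) auto
    also have "\<dots> = f c" by (metis k mult.assoc mult.commute mult_1_right)
    finally show "x * ennreal (1/C) \<le> f c" .
  qed
  then have "ennreal C * (x * ennreal (1/C)) \<le> ennreal C * (INF c\<in>S. f c)" by (rule mult_left_mono) simp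
  moreover have "ennreal C * (x * ennreal (1/C)) = x" by (metis k mult.assoc mult.commute mult_1_right)
  ultimately show ?thesis by simp
qed

lemma dir1:
  assumes q: "q \<ge> 2" and C: "C > 0"
    and H: "\<forall>f\<in>dirichlet_space M E. Lqnorm M q f \<le> ennreal C * Dnorm M E f"
    and A: "A \<in> sets M"
  shows "ennpow (emeasure M A) (1/q) \<le> ennreal C * Cap M E A"
  unfolding Cap_def
proof (rule le_mult_INF[OF C])
  fix u assume u: "u \<in> cap_test M A"
  show "ennpow (emeasure M A) (1/q) \<le> ennreal C * Dnorm M E u"
  proof (cases "u \<in> dirichlet_space M E")
    case False then show ?thesis using C by (simp add: Dnorm_def)
  next
    case True
    from u obtain U where U: "open U" "A \<subseteq> U" "AE x in M. x \<in> U \<longrightarrow> u x \<ge> 1"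
      by (auto simp: cap_test_def)
    have "emeasure M A = (\<integral>\<^sup>+x. indicator A x \<partial>M)" using A by simp
    also have "\<dots> \<le> (\<integral>\<^sup>+x. ennreal (\<bar>u x\<bar> powr q) \<partial>M)"
    proof (rule nn_integral_mono_AE)
      show "AE x in M. indicator A x \<le> ennreal (\<bar>u x\<bar> powr q)"
        using U(3)
      proof eventually_elim
        case (elim x)
        show ?case
        proof (cases "x \<in> A")
          case True then have "u x \<ge> 1" using elim U(2) by auto
          then have "1 \<le> \<bar>u x\<bar> powr q" using q by (intro ge_one_powr_ge_zero) auto
          then show ?thesis using True by simp
        next
          case False then show ?thesis by simp
        qed
      qed
    qed
    finally have "ennpow (emeasure M A) (1/q) \<le> Lqnorm M q u"
      unfolding Lqnorm_def by (rule ennpow_mono) (use q in simp)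
    also have "\<dots> \<le> ennreal C * Dnorm M E u" using H True by blast
    finally show ?thesis .
  qed
qed


lemma level_cap:
  assumes dir: "dirichlet_form M E" and even: "even_form M E"
    and f: "f \<in> L2 M" and c: "c > 0" and ef: "E1 M E (\<lambda>x. f x / c) \<le> 1"
    and g: "quasi_continuous M E g" and fg: "AE x in M. f x = g x"
    and t: "t > 0" and B: "B \<subseteq> {x. t < \<bar>g x\<bar>}"
  shows "Cap M E B \<le> ennreal (c / t)"
proof (rule ennreal_le_epsilon)
  fix e :: real assume e: "e > 0"
  obtain V where V: "open V" "Cap M E V \<le> ennreal (e/2)" "continuous_on (-V) g"
    using g e unfolding quasi_continuous_def by (meson half_gt_zero)
  have "ennreal (e/2) < ennreal e" using e by (simp add: ennreal_lessI)
  then have "Cap M E V < ennreal e" using V(2) by (meson le_less_trans)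
  then obtain u where u: "u \<in> cap_test M V" "Dnorm M E u < ennreal e"
    unfolding Cap_def by (auto simp: INF_less_iff)
  obtain r where r: "r > 0" "r < e" "E1 M E (\<lambda>x. u x / r) \<le> 1" using Dnorm_lt[OF u(2)] by metis
  from u(1) obtain U where U: "open U" "V \<subseteq> U" "AE x in M. x \<in> U \<longrightarrow> u x \<ge> 1" and uL: "u \<in> L2 M"
    by (auto simp: cap_test_def)
  have "open {y::real. t < \<bar>y\<bar>}" by (intro open_Collect_less continuous_intros)
  then obtain Op where Op: "open Op" "Op \<inter> -V = g -` {y. t < \<bar>y\<bar>} \<inter> -V"
    using V(3) unfolding continuous_on_open_invariant by blast
  define w where "w = (\<lambda>x. \<bar>f x\<bar> / t + \<bar>u x\<bar>)"
  have aL: "(\<lambda>x. \<bar>f x\<bar> / t) \<in> L2 M" using L2_div[OF L2_abs[OF f]] .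
  have bL: "(\<lambda>x. \<bar>u x\<bar>) \<in> L2 M" using L2_abs[OF uL] .
  have wL: "w \<in> L2 M" unfolding w_def using L2_add[OF aL bL] .
  have ct: "c / t > 0" using c t by simp
  have ea: "E1 M E (\<lambda>x. (\<bar>f x\<bar> / t) / (c / t)) \<le> 1"
  proof -
    have "(\<lambda>x. (\<bar>f x\<bar> / t) / (c / t)) = (\<lambda>x. \<bar>f x\<bar> / c)" using t by auto
    then show ?thesis using E1_abs[OF dir even f c] ef by simp
  qed
  have eb: "E1 M E (\<lambda>x. \<bar>u x\<bar> / r) \<le> 1" using E1_abs[OF dir even uL r(1)] r(3) by simp
  have ew: "E1 M E (\<lambda>x. (\<bar>f x\<bar> / t + \<bar>u x\<bar>) / (c / t + r)) \<le> 1"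
    using E1_tri[OF dir aL bL ct r(1) ea eb] .
  have pos: "c / t + r > 0" using ct r(1) by simp
  have Dw: "Dnorm M E w \<le> ennreal (c / t + r)"
    unfolding w_def by (rule Dnorm_le(2)[OF wL[unfolded w_def] pos ew])
  have "w \<in> cap_test M B"
    unfolding cap_test_def
  proof (intro CollectI conjI exI)
    show "w \<in> L2 M" by (rule wL)
    show "open (Op \<union> U)" using Op(1) U(1) by auto
    show "B \<subseteq> Op \<union> U"
    proof
      fix x assume "x \<in> B"
      then have "t < \<bar>g x\<bar>" using B by auto
      then show "x \<in> Op \<union> U" using Op(2) U(2) by (cases "x \<in> V") auto
    qed
    show "AE x in M. x \<in> Op \<union> U \<longrightarrow> 1 \<le> w x"
      using U(3) fg
    proof eventually_elim
      case (elim x)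
      show ?case
      proof
        assume x: "x \<in> Op \<union> U"
        show "1 \<le> w x"
        proof (cases "x \<in> U")
          case True
          then have "1 \<le> \<bar>u x\<bar>" using elim by auto
          moreover have "0 \<le> \<bar>f x\<bar> / t" using t by simp
          ultimately show ?thesis unfolding w_def by linarith
        next
          case False
          then have "x \<in> Op" "x \<notin> V" using x U(2) by auto
          then have "t < \<bar>g x\<bar>" using Op(2) by auto
          then have "1 < \<bar>f x\<bar> / t" using t elim by simp
          then show ?thesis unfolding w_def by (smt (verit) abs_ge_zero)
        qed
      qed
    qed
  qed
  then have "Cap M E B \<le> Dnorm M E w" unfolding Cap_def by (rule INF_lower)
  also have "\<dots> \<le> ennreal (c / t + r)" by (rule Dw)
  also have "\<dots> \<le> ennreal (c / t) + ennreal e" using ct r by (simp add: ennreal_plus[symmetric] del: ennreal_plus)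
  finally show "Cap M E B \<le> ennreal (c / t) + ennreal e" .
qed

lemma ennpow_le_ennreal:
  assumes H: "ennpow x r \<le> ennreal y" and r: "r > 0" and y: "y \<ge> 0"
  shows "x \<le> ennreal (y powr (1/r))"
proof -
  have "x \<noteq> \<infinity>" using H by (auto simp: ennpow_def top_unique)
  then obtain m where m: "x = ennreal m" "m \<ge> 0" by (cases x) auto
  then have "m powr r \<le> y" using H y by (simp add: ennpow_def)
  then have "(m powr r) powr (1/r) \<le> y powr (1/r)" using r by (intro powr_mono2) auto
  moreover have "(m powr r) powr (1/r) = m" using r m(2) by (simp add: powr_powr powr_one)
  ultimately show ?thesis using m by (simp add: ennreal_leI)
qed

lemma level_measure:
  assumes borel: "sets M = sets borel" and dir: "dirichlet_form M E" and even: "even_form M E"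
    and f: "f \<in> L2 M" and c: "c > 0" and ef: "E1 M E (\<lambda>x. f x / c) \<le> 1"
    and g: "quasi_continuous M E g" and fg: "AE x in M. f x = g x"
    and t: "t > 0" and C1: "C1 > 0" and q1: "q1 > 0"
    and H: "\<forall>A\<in>sets M. ennreal C1 * Cap M E A \<ge> ennpow (emeasure M A) (1/q1)"
  shows "emeasure M {x\<in>space M. t < \<bar>f x\<bar>} \<le> ennreal ((C1 * c / t) powr q1)"
proof -
  from fg obtain N where N: "{x\<in>space M. f x \<noteq> g x} \<subseteq> N" "emeasure M N = 0" "N \<in> sets M"
    by (rule AE_E) auto
  have fm: "f \<in> borel_measurable M" using f by (simp add: L2_def)
  define A where "A = {x\<in>space M. t < \<bar>f x\<bar>}"
  have Am: "A \<in> sets M" unfolding A_def using fm by measurable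
  have Bm: "A - N \<in> sets M" using Am N(3) by auto
  have eqm: "emeasure M (A - N) = emeasure M A" using N Am by (intro emeasure_Diff_null_set) auto
  have "A - N \<subseteq> {x. t < \<bar>g x\<bar>}" using N(1) unfolding A_def by auto
  then have cap: "Cap M E (A - N) \<le> ennreal (c / t)" by (rule level_cap[OF dir even f c ef g fg t])
  have "ennpow (emeasure M (A - N)) (1/q1) \<le> ennreal C1 * Cap M E (A - N)" using H Bm by blast
  also have "\<dots> \<le> ennreal C1 * ennreal (c / t)" using cap by (rule mult_left_mono) simp
  also have "\<dots> = ennreal (C1 * c / t)" using C1 c t by (simp add: ennreal_mult[symmetric])
  finally have "emeasure M (A - N) \<le> ennreal ((C1 * c / t) powr (1 / (1/q1)))"
    by (rule ennpow_le_ennreal) (use q1 C1 c t in auto)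
  then show ?thesis using eqm q1 unfolding A_def by simp
qed


lemma pow_term:
  fixes c C1 q q1 :: real and k :: nat
  assumes c: "c > 0" and C1: "C1 > 0"
  shows "(2 powr (real k + 1) * c) powr q * (2 * C1 * c / (2 powr real k * c)) powr q1
       = c powr q * 2 powr q * (2 * C1) powr q1 * (2 powr (q - q1)) ^ k"
proof -
  have a: "(2 powr (real k + 1) * c) powr q = 2 powr (real k * q) * 2 powr q * c powr q"
    by (simp add: powr_mult powr_powr distrib_right powr_add)
  have "2 * C1 * c / (2 powr real k * c) = (2 * C1) / 2 powr real k" using c by simp
  then have b: "(2 * C1 * c / (2 powr real k * c)) powr q1 = (2 * C1) powr q1 / 2 powr (real k * q1)"
    by (simp add: powr_divide powr_powr)
  have d: "(2 powr (q - q1)) ^ k = 2 powr (real k * q) / 2 powr (real k * q1)"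
  proof -
    have "(2 powr (q - q1)) ^ k = (2::real) powr (real k * (q - q1))" by (rule powr_power) simp
    also have "\<dots> = 2 powr (real k * q - real k * q1)" by (simp add: right_diff_distrib)
    also have "\<dots> = 2 powr (real k * q) / 2 powr (real k * q1)" by (rule powr_diff)
    finally show ?thesis .
  qed
  show ?thesis unfolding a b d by (simp add: field_simps)
qed

lemma pt_bound:
  fixes y c q :: real
  assumes c: "c > 0" and q: "q \<ge> 2"
  shows "ennreal (\<bar>y\<bar> powr q) \<le> ennreal (c powr (q-2) * y\<^sup>2)
     + (\<Sum>k. if 2 powr real k * c \<le> \<bar>y\<bar> then ennreal ((2 powr (real k + 1) * c) powr q) else 0)"
proof (cases "\<bar>y\<bar> \<le> c")
  case True
  have "\<bar>y\<bar> powr q \<le> c powr (q-2) * y\<^sup>2"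
  proof (cases "y = 0")
    case True then show ?thesis by simp
  next
    case False
    have "\<bar>y\<bar> powr q = \<bar>y\<bar> powr ((q-2) + 2)" by simp
    also have "\<dots> = \<bar>y\<bar> powr (q-2) * \<bar>y\<bar> powr 2" by (rule powr_add)
    also have "\<dots> = \<bar>y\<bar> powr (q-2) * y\<^sup>2" by simp
    also have "\<dots> \<le> c powr (q-2) * y\<^sup>2"
      using True q by (intro mult_right_mono powr_mono2) auto
    finally show ?thesis .
  qed
  then show ?thesis by (intro add_increasing2) (auto intro: ennreal_leI)
next
  case False
  define l where "l = log 2 (\<bar>y\<bar> / c)"
  have yc: "\<bar>y\<bar> / c > 1" using False c by simp
  have l0: "l > 0" unfolding l_def using yc by simp
  define k where "k = nat \<lfloor>l\<rfloor>"
  have k1: "real k \<le> l" unfolding k_def using l0 by linarith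
  have k2: "l < real k + 1" unfolding k_def using l0 by linarith
  have pl: "2 powr l = \<bar>y\<bar> / c" unfolding l_def using yc by simp
  have "2 powr real k \<le> \<bar>y\<bar> / c" using k1 pl by (metis powr_le_cancel_iff one_less_numeral_iff semiring_norm(76))
  then have s: "2 powr real k * c \<le> \<bar>y\<bar>" using c by (simp add: field_simps)
  have "\<bar>y\<bar> / c < 2 powr (real k + 1)" using k2 pl by (metis powr_less_cancel_iff one_less_numeral_iff semiring_norm(76))
  then have "\<bar>y\<bar> \<le> 2 powr (real k + 1) * c" using c by (simp add: field_simps)
  then have "\<bar>y\<bar> powr q \<le> (2 powr (real k + 1) * c) powr q" using q by (intro powr_mono2) auto
  then have "ennreal (\<bar>y\<bar> powr q) \<le> (if 2 powr real k * c \<le> \<bar>y\<bar> then ennreal ((2 powr (real k + 1) * c) powr q) else 0)"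
    using s by (simp add: ennreal_leI)
  also have "\<dots> \<le> (\<Sum>k. if 2 powr real k * c \<le> \<bar>y\<bar> then ennreal ((2 powr (real k + 1) * c) powr q) else 0)"
    by (meson ennreal_suminf_lessD not_le order.irrefl)
  finally show ?thesis by (intro add_increasing) auto
qed



lemma lq_bound:
  assumes sp: "space M = UNIV" and fm: "f \<in> borel_measurable M" and fi: "integrable M (\<lambda>x. (f x)\<^sup>2)"
    and c: "c > 0" and f2: "integral\<^sup>L M (\<lambda>x. (f x)\<^sup>2) \<le> c\<^sup>2"
    and q: "2 \<le> q" "q < q1" and C1: "C1 > 0"
    and lev: "\<And>s. s > 0 \<Longrightarrow> emeasure M {x. s \<le> \<bar>f x\<bar>} \<le> ennreal ((2 * C1 * c / s) powr q1)"
  shows "(\<integral>\<^sup>+x. ennreal (\<bar>f x\<bar> powr q) \<partial>M)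
     \<le> ennreal ((1 + 2 powr q * (2 * C1) powr q1 / (1 - 2 powr (q - q1))) * c powr q)"
proof -
  define \<rho> where "\<rho> = (2::real) powr (q - q1)"
  have \<rho>: "0 < \<rho>" "\<rho> < 1" unfolding \<rho>_def using q by (auto intro: powr_less_one)
  define D where "D = c powr q * 2 powr q * (2 * C1) powr q1"
  have D: "D \<ge> 0" unfolding D_def by simp
  define a where "a k = (2 powr (real k + 1) * c) powr q" for k :: nat
  define S where "S k = {x. 2 powr real k * c \<le> \<bar>f x\<bar>}" for k :: nat
  have Sm: "S k \<in> sets M" for k
  proof -
    have "{x \<in> space M. 2 powr real k * c \<le> \<bar>f x\<bar>} \<in> sets M" using fm by measurable
    then show ?thesis unfolding S_def sp by simp
  qed
  have pt: "ennreal (\<bar>f x\<bar> powr q) \<le> ennreal (c powr (q-2) * (f x)\<^sup>2) + (\<Sum>k. ennreal (a k) * indicator (S k) x)" for x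
  proof -
    have "(\<lambda>k. ennreal (a k) * indicator (S k) x) =
      (\<lambda>k. if 2 powr real k * c \<le> \<bar>f x\<bar> then ennreal ((2 powr (real k + 1) * c) powr q) else 0)"
      by (auto simp: a_def S_def indicator_def)
    then show ?thesis using pt_bound[OF c q(1), of "f x"] by simp
  qed
  have m1: "(\<lambda>x. ennreal (c powr (q-2) * (f x)\<^sup>2)) \<in> borel_measurable M" using fm by measurable
  have m2: "(\<lambda>x. ennreal (a k) * indicator (S k) x) \<in> borel_measurable M" for k
    using Sm by measurable
  have fi2: "integrable M (\<lambda>x. c powr (q-2) * (f x)\<^sup>2)" using fi by simp
  have I1: "(\<integral>\<^sup>+x. ennreal (\<bar>f x\<bar> powr q) \<partial>M)
      \<le> (\<integral>\<^sup>+x. ennreal (c powr (q-2) * (f x)\<^sup>2) + (\<Sum>k. ennreal (a k) * indicator (S k) x) \<partial>M)"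
    by (rule nn_integral_mono) (rule pt)
  have m3: "(\<lambda>x. \<Sum>k. ennreal (a k) * indicator (S k) x) \<in> borel_measurable M"
    using m2 by (rule borel_measurable_suminf_order)
  have I2: "(\<integral>\<^sup>+x. ennreal (c powr (q-2) * (f x)\<^sup>2) + (\<Sum>k. ennreal (a k) * indicator (S k) x) \<partial>M)
     = (\<integral>\<^sup>+x. ennreal (c powr (q-2) * (f x)\<^sup>2) \<partial>M) + (\<integral>\<^sup>+x. (\<Sum>k. ennreal (a k) * indicator (S k) x) \<partial>M)"
    using nn_integral_add[OF m1 m3] .
  have I3: "(\<integral>\<^sup>+x. (\<Sum>k. ennreal (a k) * indicator (S k) x) \<partial>M) = (\<Sum>k. \<integral>\<^sup>+x. ennreal (a k) * indicator (S k) x \<partial>M)"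
    using nn_integral_suminf[OF m2] .
  have I4: "(\<Sum>k. \<integral>\<^sup>+x. ennreal (a k) * indicator (S k) x \<partial>M) = (\<Sum>k. ennreal (a k) * emeasure M (S k))"
    using Sm by (simp add: nn_integral_cmult_indicator)
  have I5: "(\<integral>\<^sup>+x. ennreal (c powr (q-2) * (f x)\<^sup>2) \<partial>M) = ennreal (c powr (q-2) * integral\<^sup>L M (\<lambda>x. (f x)\<^sup>2))"
    using nn_integral_eq_integral[OF fi2] by simp
  have X1: "(\<integral>\<^sup>+x. ennreal (\<bar>f x\<bar> powr q) \<partial>M) \<le> ennreal (c powr (q-2) * integral\<^sup>L M (\<lambda>x. (f x)\<^sup>2)) + (\<Sum>k. ennreal (a k) * emeasure M (S k))"
    using I1 unfolding I2 I3 I4 I5 .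
  have X2: "ennreal (c powr (q-2) * integral\<^sup>L M (\<lambda>x. (f x)\<^sup>2)) + (\<Sum>k. ennreal (a k) * emeasure M (S k))
      \<le> ennreal (c powr q) + (\<Sum>k. ennreal (D * \<rho> ^ k))"
  proof (rule add_mono)
    have "c powr (q-2) * integral\<^sup>L M (\<lambda>x. (f x)\<^sup>2) \<le> c powr (q-2) * c\<^sup>2"
      using f2 by (intro mult_left_mono) auto
    also have "\<dots> = c powr (q-2) * c powr 2" using c by simp
    also have "\<dots> = c powr q" by (simp flip: powr_add)
    finally show "ennreal (c powr (q-2) * integral\<^sup>L M (\<lambda>x. (f x)\<^sup>2)) \<le> ennreal (c powr q)" by (rule ennreal_leI)
  next
    show "(\<Sum>k. ennreal (a k) * emeasure M (S k)) \<le> (\<Sum>k. ennreal (D * \<rho> ^ k))"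
    proof (rule suminf_le)
      fix k
      have sk: "2 powr real k * c > 0" using c by simp
      have "ennreal (a k) * emeasure M (S k) \<le> ennreal (a k) * ennreal ((2 * C1 * c / (2 powr real k * c)) powr q1)"
        unfolding S_def by (rule mult_left_mono[OF lev[OF sk]]) simp
      also have "\<dots> = ennreal (a k * (2 * C1 * c / (2 powr real k * c)) powr q1)"
        by (subst ennreal_mult) (auto simp: a_def)
      also have "\<dots> = ennreal (D * \<rho> ^ k)"
        unfolding a_def D_def \<rho>_def using pow_term[OF c C1, of k q q1] by simp
      finally show "ennreal (a k) * emeasure M (S k) \<le> ennreal (D * \<rho> ^ k)" .
    qed auto
  qed
  have sumeq: "(\<Sum>k. ennreal (D * \<rho> ^ k)) = ennreal (D / (1 - \<rho>))"
  proof -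
    have sg: "summable (\<lambda>k. \<rho> ^ k)" using \<rho> by (intro summable_geometric) simp
    have e1: "(\<Sum>k. ennreal (D * \<rho> ^ k)) = ennreal (\<Sum>k. D * \<rho> ^ k)"
      using D \<rho> by (intro suminf_ennreal2 summable_mult sg) auto
    have e2: "(\<Sum>k. D * \<rho> ^ k) = D * (1 / (1 - \<rho>))"
      using suminf_mult[OF sg, of D] suminf_geometric[of \<rho>] \<rho> by simp
    show ?thesis unfolding e1 e2 by simp
  qed
  have X3: "ennreal (c powr q) + ennreal (D / (1 - \<rho>)) = ennreal (c powr q + D / (1 - \<rho>))"
    using D \<rho> by simp
  have X4: "c powr q + D / (1 - \<rho>) = (1 + 2 powr q * (2 * C1) powr q1 / (1 - 2 powr (q - q1))) * c powr q"
  proof -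
    have nz: "1 - \<rho> \<noteq> 0" using \<rho> by simp
    show ?thesis unfolding D_def \<rho>_def[symmetric] using nz by (simp add: field_simps)
  qed
  show ?thesis using order_trans[OF X1 X2] unfolding sumeq X3 X4 .
qed


lemma dir2:
  assumes borel: "sets M = sets borel" and dir: "dirichlet_form M E" and even: "even_form M E"
    and qc: "\<forall>f\<in>dirichlet_space M E. qc_element M E f"
    and q: "2 \<le> q" "q < q1" and C1: "C1 > 0"
    and H: "\<forall>A\<in>sets M. ennreal C1 * Cap M E A \<ge> ennpow (emeasure M A) (1/q1)"
  shows "\<exists>C::real>0. \<forall>f\<in>dirichlet_space M E. Lqnorm M q f \<le> ennreal C * Dnorm M E f"
proof -
  have sp: "space M = UNIV" using borel by (rule space_eq)
  define K where "K = 1 + 2 powr q * (2 * C1) powr q1 / (1 - 2 powr (q - q1))"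
  have "(2::real) powr (q - q1) < 1" using q by (intro powr_less_one) auto
  then have "2 powr q * (2 * C1) powr q1 / (1 - 2 powr (q - q1)) \<ge> 0" by simp
  then have K: "K > 0" unfolding K_def by linarith
  have q1: "q1 > 0" using q by simp
  show ?thesis
  proof (intro exI[of _ "K powr (1/q)"] conjI ballI)
    show "K powr (1/q) > 0" using K by simp
    fix f assume fD: "f \<in> dirichlet_space M E"
    then have fL: "f \<in> L2 M" by (simp add: dirichlet_space_def)
    then have fm: "f \<in> borel_measurable M" and fi: "integrable M (\<lambda>x. (f x)\<^sup>2)" by (auto simp: L2_def)
    obtain g where g: "quasi_continuous M E g" "AE x in M. f x = g x"
      using qc fD unfolding qc_element_def by blast
    have DN: "Dnorm M E f = (INF c\<in>{c::real. c > 0 \<and> E1 M E (\<lambda>x. f x / c) \<le> 1}. ennreal c)"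
      using fD by (simp add: Dnorm_def)
    show "Lqnorm M q f \<le> ennreal (K powr (1/q)) * Dnorm M E f"
      unfolding DN
    proof (rule le_mult_INF)
      show "K powr (1/q) > 0" using K by simp
      fix c assume "c \<in> {c::real. c > 0 \<and> E1 M E (\<lambda>x. f x / c) \<le> 1}"
      then have c: "c > 0" and ef: "E1 M E (\<lambda>x. f x / c) \<le> 1" by auto
      have "ennreal (integral\<^sup>L M (\<lambda>x. (f x / c)\<^sup>2)) \<le> 1"
        using ef unfolding E1_def by (metis add_increasing2 order_trans zero_le le_iff_add)
      then have "integral\<^sup>L M (\<lambda>x. (f x / c)\<^sup>2) \<le> 1" by (simp add: ennreal_le_1)
      moreover have "integral\<^sup>L M (\<lambda>x. (f x / c)\<^sup>2) = integral\<^sup>L M (\<lambda>x. (f x)\<^sup>2) / c\<^sup>2"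
        by (simp add: power_divide)
      ultimately have f2: "integral\<^sup>L M (\<lambda>x. (f x)\<^sup>2) \<le> c\<^sup>2" using c by (simp add: divide_le_eq)
      have lev: "emeasure M {x. s \<le> \<bar>f x\<bar>} \<le> ennreal ((2 * C1 * c / s) powr q1)" if s: "s > 0" for s
      proof -
        have "{x. s \<le> \<bar>f x\<bar>} \<subseteq> {x\<in>space M. s / 2 < \<bar>f x\<bar>}" using s sp by auto
        moreover have "{x\<in>space M. s / 2 < \<bar>f x\<bar>} \<in> sets M" using fm by measurable
        ultimately have "emeasure M {x. s \<le> \<bar>f x\<bar>} \<le> emeasure M {x\<in>space M. s / 2 < \<bar>f x\<bar>}"
          by (rule emeasure_mono)
        also have "\<dots> \<le> ennreal ((C1 * c / (s / 2)) powr q1)"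
          by (rule level_measure[OF borel dir even fL c ef g]) (use s C1 q1 H in auto)
        also have "C1 * c / (s / 2) = 2 * C1 * c / s" by simp
        finally show ?thesis .
      qed
      have "(\<integral>\<^sup>+x. ennreal (\<bar>f x\<bar> powr q) \<partial>M) \<le> ennreal (K * c powr q)"
        unfolding K_def by (rule lq_bound[OF sp fm fi c f2 q C1 lev])
      then have "Lqnorm M q f \<le> ennpow (ennreal (K * c powr q)) (1/q)"
        unfolding Lqnorm_def by (rule ennpow_mono) (use q in simp)
      also have "\<dots> = ennreal ((K * c powr q) powr (1/q))" using K c by (simp add: ennpow_def)
      also have "(K * c powr q) powr (1/q) = K powr (1/q) * c"
        using K c q by (simp add: powr_mult powr_powr)
      also have "ennreal (K powr (1/q) * c) = ennreal (K powr (1/q)) * ennreal c"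
        using c by (simp add: ennreal_mult)
      finally show "Lqnorm M q f \<le> ennreal (K powr (1/q)) * ennreal c" .
    qed
  qed
qed


theorem mainTheorem5:
  fixes M :: "'a::t2_space measure" and E :: "('a \<Rightarrow> real) \<Rightarrow> ennreal" and p :: real
  assumes borel: "sets M = sets borel"
    and full_support: "\<forall>U. open U \<and> U \<noteq> {} \<longrightarrow> emeasure M U \<noteq> 0"
    and dir: "dirichlet_form M E"
    and even: "even_form M E"
    and qc: "\<forall>f\<in>dirichlet_space M E. qc_element M E f"
    and p: "p > 2"
  shows "(\<forall>q\<in>{2..<p}. \<exists>C::real>0. \<forall>f\<in>dirichlet_space M E.
            Lqnorm M q f \<le> ennreal C * Dnorm M E f)
     \<longleftrightarrow> (\<forall>q\<in>{2..<p}. \<exists>C::real>0. \<forall>A\<in>sets M.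
            ennreal C * Cap M E A \<ge> ennpow (emeasure M A) (1 / q))"
proof
  assume L: "\<forall>q\<in>{2..<p}. \<exists>C::real>0. \<forall>f\<in>dirichlet_space M E. Lqnorm M q f \<le> ennreal C * Dnorm M E f"
  show "\<forall>q\<in>{2..<p}. \<exists>C::real>0. \<forall>A\<in>sets M. ennreal C * Cap M E A \<ge> ennpow (emeasure M A) (1 / q)"
  proof
    fix q assume q: "q \<in> {2..<p}"
    then obtain C where C: "C > 0" "\<forall>f\<in>dirichlet_space M E. Lqnorm M q f \<le> ennreal C * Dnorm M E f"
      using L by blast
    have "\<forall>A\<in>sets M. ennreal C * Cap M E A \<ge> ennpow (emeasure M A) (1 / q)"
      using dir1[of q C M E] C q by auto
    then show "\<exists>C::real>0. \<forall>A\<in>sets M. ennreal C * Cap M E A \<ge> ennpow (emeasure M A) (1 / q)"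
      using C(1) by blast
  qed
next
  assume R: "\<forall>q\<in>{2..<p}. \<exists>C::real>0. \<forall>A\<in>sets M. ennreal C * Cap M E A \<ge> ennpow (emeasure M A) (1 / q)"
  show "\<forall>q\<in>{2..<p}. \<exists>C::real>0. \<forall>f\<in>dirichlet_space M E. Lqnorm M q f \<le> ennreal C * Dnorm M E f"
  proof
    fix q assume q: "q \<in> {2..<p}"
    define q1 where "q1 = (q + p) / 2"
    have q1: "q1 \<in> {2..<p}" "q < q1" using q unfolding q1_def by auto
    obtain C1 where C1: "C1 > 0" "\<forall>A\<in>sets M. ennreal C1 * Cap M E A \<ge> ennpow (emeasure M A) (1 / q1)"
      using R q1(1) by blast
    show "\<exists>C::real>0. \<forall>f\<in>dirichlet_space M E. Lqnorm M q f \<le> ennreal C * Dnorm M E f"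
      using dir2[OF borel dir even qc _ q1(2) C1] q by auto
  qed
qed

end
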